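(* With the notation of the context, $$|S|\lesssim\min\Big(N_3^{2-\alpha}\log(2+N_1\vee N_2)\,(N_1\wedge N_2)+N_1N_2,\ \ N_1^{2-\alpha}\log(2+N_2\vee N_3)\,(N_2\wedge N_3)+N_2N_3\Big).$$
   Context: Fix $\alpha\in(1,2)$, dyadic numbers $1\le N_1,N_2,N_3\le N$, a real number $m$ and a constant $C_0>0$. Let $S$ be the set of $(k,k_1,k_2,k_3)\in\mathbb Z^4$ with $k=k_1-k_2+k_3$, $k_2\notin\{k_1,k_3\}$, $\big||k_1|^\alpha-|k_2|^\alpha+|k_3|^\alpha-|k|^\alpha-m\big|\le C_0$, $|k|\le N$ and $|k_j|\le N_j$ for $j=1,2,3$. $|A|$ is cardinality, $a\wedge b=\min(a,b)$, $a\vee b=\max(a,b)$. $A\lesssim B$ means $A\le CB$ with $C$ depending only on $\alpha$ and $C_0$. *)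

theory Defs
  imports Complex_Main
begin

definition dyadic :: "real \<Rightarrow> bool" where
  "dyadic x \<longleftrightarrow> (\<exists>j::nat. x = 2 ^ j)"

definition resS :: "real \<Rightarrow> real \<Rightarrow> real \<Rightarrow> real \<Rightarrow> real \<Rightarrow> real \<Rightarrow> real
    \<Rightarrow> (int \<times> int \<times> int \<times> int) set" where
  "resS \<alpha> C0 m N N1 N2 N3 =
    {(k, k1, k2, k3). k = k1 - k2 + k3 \<and> k2 \<noteq> k1 \<and> k2 \<noteq> k3 \<and>
      \<bar>\<bar>real_of_int k1\<bar> powr \<alpha> - \<bar>real_of_int k2\<bar> powr \<alpha> + \<bar>real_of_int k3\<bar> powr \<alpha>
        - \<bar>real_of_int k\<bar> powr \<alpha> - m\<bar> \<le> C0 \<and>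
      \<bar>real_of_int k\<bar> \<le> N \<and> \<bar>real_of_int k1\<bar> \<le> N1 \<and> \<bar>real_of_int k2\<bar> \<le> N2 \<and>
      \<bar>real_of_int k3\<bar> \<le> N3}"

end

theory Submission
  imports Defs
begin


lemma concA:
  fixes b u v R :: real
  assumes b: "0 < b" "b < 1" and u: "0 \<le> u" "u < v" "v \<le> R"
  shows "b * (v - u) * R powr (b - 1) \<le> v powr b - u powr b"
proof (cases "u = 0")
  case True
  have vpos: "v > 0" using u True by simp
  have "R powr (b - 1) \<le> v powr (b - 1)" by (rule powr_mono2') (use b vpos u in auto)
  have "v powr b = v * v powr (b - 1)" using vpos by (simp add: powr_diff)
  moreover have "b * (v * R powr (b-1)) \<le> 1 * (v * R powr (b-1))" using b vpos by (intro mult_right_mono) auto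
  moreover have "v * R powr (b-1) \<le> v * v powr (b-1)" using \<open>R powr (b - 1) \<le> v powr (b - 1)\<close> vpos by simp
  ultimately show ?thesis using True by (simp add: algebra_simps)
next
  case False
  hence upos: "u > 0" using u by simp
  have "\<exists>z. u < z \<and> z < v \<and> (v powr b - u powr b = (v - u) * (b * z powr (b - 1)))"
    by (rule MVT2) (use u upos in \<open>auto intro!: has_real_derivative_powr\<close>)
  then obtain z where z: "u < z" "z < v" "v powr b - u powr b = (v - u) * (b * z powr (b - 1))"
    by blast
  have "R powr (b - 1) \<le> z powr (b - 1)" by (rule powr_mono2') (use b z u upos in auto)
  hence "b * (v - u) * R powr (b - 1) \<le> b * (v - u) * z powr (b - 1)"
    using b u by (intro mult_left_mono) auto
  with z show ?thesis by (simp add: algebra_simps)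
qed

definition gf :: "real \<Rightarrow> real \<Rightarrow> real" where "gf b t = sgn t * \<bar>t\<bar> powr b"

lemma gmono:
  fixes b u v R :: real
  assumes b: "0 < b" "b < 1" and uv: "u < v" "\<bar>u\<bar> \<le> R" "\<bar>v\<bar> \<le> R"
  shows "b * (v - u) * R powr (b - 1) \<le> gf b v - gf b u"
proof -
  consider "0 \<le> u" | "u < 0" "0 \<le> v" | "v < 0" by linarith
  then show ?thesis
  proof cases
    case 1
    then show ?thesis using concA[OF b 1 uv(1)] uv unfolding gf_def
      by (cases "u = 0") (auto simp: sgn_if)
  next
    case 2
    have Rpos: "R > 0" using uv 2 by auto
    have h: "w * R powr (b-1) \<le> w powr b" if "0 \<le> w" "w \<le> R" for w
    proof (cases "w = 0")
      case False
      hence wpos: "w > 0" using that by simp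
      have "R powr (b - 1) \<le> w powr (b - 1)" by (rule powr_mono2') (use b wpos that in auto)
      hence "w * R powr (b-1) \<le> w * w powr (b-1)" using wpos by simp
      also have "\<dots> = w powr b" using wpos by (simp add: powr_diff)
      finally show ?thesis .
    qed simp
    have f1: "v * R powr (b-1) \<le> v powr b" using h 2 uv by auto
    have f2: "(-u) * R powr (b-1) \<le> (-u) powr b" by (rule h) (use 2 uv in auto)
    have A1: "b * ((v - u) * R powr (b - 1)) \<le> 1 * ((v - u) * R powr (b - 1))"
      by (rule mult_right_mono) (use b uv in auto)
    have e: "gf b v - gf b u = v powr b + (-u) powr b" using 2 by (cases "v=0") (auto simp: gf_def sgn_if)
    have "b * (v - u) * R powr (b - 1) = b * ((v - u) * R powr (b - 1))" by (simp only: mult.assoc)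
    also have "\<dots> \<le> (v - u) * R powr (b - 1)" using A1 by simp
    also have "\<dots> = v * R powr (b-1) + (-u) * R powr (b-1)" by (simp add: algebra_simps)
    also have "\<dots> \<le> v powr b + (-u) powr b" using f1 f2 by (rule add_mono)
    also have "\<dots> = gf b v - gf b u" using e by simp
    finally show ?thesis .
  next
    case 3
    have "b * ((-u) - (-v)) * R powr (b - 1) \<le> (-u) powr b - (-v) powr b"
      using concA[OF b, of "-v" "-u" R] 3 uv by auto
    then show ?thesis using 3 uv unfolding gf_def by (auto simp: sgn_if algebra_simps)
  qed
qed

lemma derivF:
  fixes a t :: real
  assumes "t \<noteq> 0"
  shows "((\<lambda>x. \<bar>x\<bar> powr a) has_real_derivative a * gf (a - 1) t) (at t)"
proof (cases "t > 0")
  case True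
  have d: "((\<lambda>x. x powr a) has_real_derivative a * t powr (a - 1)) (at t)"
    using True by (rule has_real_derivative_powr)
  have ev: "eventually (\<lambda>x. x powr a = \<bar>x\<bar> powr a) (nhds t)"
  proof -
    have "eventually (\<lambda>x. x \<in> {0<..}) (nhds t)" by (rule eventually_nhds_in_open) (use True in auto)
    then show ?thesis by eventually_elim auto
  qed
  have eq: "a * t powr (a - 1) = a * gf (a - 1) t" using True by (simp add: gf_def)
  show ?thesis by (rule DERIV_cong_ev[THEN iffD1, OF refl ev eq d])
next
  case False
  hence tn: "t < 0" using assms by simp
  have d: "((\<lambda>x. (-x) powr a) has_real_derivative a * (-t) powr (a - 1) * (-1)) (at t)"
    using tn by (auto intro!: derivative_eq_intros)
  have ev: "eventually (\<lambda>x. (-x) powr a = \<bar>x\<bar> powr a) (nhds t)"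
  proof -
    have "eventually (\<lambda>x. x \<in> {..<0}) (nhds t)" by (rule eventually_nhds_in_open) (use tn in auto)
    then show ?thesis by eventually_elim auto
  qed
  have eq: "a * (-t) powr (a - 1) * (-1) = a * gf (a - 1) t" using tn by (simp add: gf_def)
  show ?thesis by (rule DERIV_cong_ev[THEN iffD1, OF refl ev eq d])
qed


lemma contF: "0 < a \<Longrightarrow> continuous_on S (\<lambda>x::real. \<bar>x + c\<bar> powr a)"
  by (rule continuous_on_powr') (auto intro!: continuous_intros)

lemma step:
  fixes a M :: real and d j :: int
  assumes a: "1 < a" "a < 2" and d: "d \<ge> 1" and M: "\<bar>real_of_int j\<bar> \<le> M" "\<bar>real_of_int j + 1\<bar> \<le> M"
  shows "a * (a - 1) * d * (M + d) powr (a - 2)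
     \<le> (\<bar>real_of_int j + 1 + d\<bar> powr a - \<bar>real_of_int j + 1\<bar> powr a)
        - (\<bar>real_of_int j + d\<bar> powr a - \<bar>real_of_int j\<bar> powr a)"
proof -
  define G where "G = (\<lambda>x::real. \<bar>x + d\<bar> powr a - \<bar>x + 0\<bar> powr a)"
  have cont: "continuous_on {real_of_int j..real_of_int j + 1} G"
    unfolding G_def using a by (intro continuous_intros contF) auto
  have nz: "x \<noteq> 0" "x + d \<noteq> 0" if "real_of_int j < x" "x < real_of_int j + 1" for x
  proof -
    show "x \<noteq> 0"
    proof
      assume "x = 0" hence "j < 0" "-1 < j" using that by auto
      thus False by simp
    qed
    show "x + d \<noteq> 0"
    proof
      assume "x + d = 0" hence "j < -d" "-d < j + 1" using that by linarith+
      thus False by simp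
    qed
  qed
  have der: "(G has_real_derivative a * (gf (a - 1) (x + d) - gf (a - 1) x)) (at x)"
    if "real_of_int j < x" "x < real_of_int j + 1" for x
  proof -
    have d1: "((\<lambda>x. \<bar>x\<bar> powr a) has_real_derivative a * gf (a - 1) (x + d)) (at (x + d))"
      using derivF nz[OF that] by blast
    have d2: "((\<lambda>x. \<bar>x\<bar> powr a) has_real_derivative a * gf (a - 1) x) (at x)"
      using derivF nz[OF that] by blast
    have d1': "((\<lambda>x. \<bar>x + d\<bar> powr a) has_real_derivative a * gf (a - 1) (x + d) * 1) (at x)"
    proof -
      have d3: "((\<lambda>x. x + real_of_int d) has_real_derivative 1) (at x)" by (auto intro!: derivative_eq_intros)
      show ?thesis using DERIV_chain2[where f="\<lambda>x. \<bar>x\<bar> powr a" and g="\<lambda>x. x + real_of_int d", OF d1 d3] by simp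
    qed
    show ?thesis unfolding G_def using DERIV_diff[OF d1' d2] by (simp add: algebra_simps)
  qed
  have "\<exists>l z. real_of_int j < z \<and> z < real_of_int j + 1 \<and> DERIV G z :> l \<and>
    G (real_of_int j + 1) - G (real_of_int j) = (real_of_int j + 1 - real_of_int j) * l"
    by (rule MVT[OF _ cont]) (use der in \<open>auto simp: real_differentiable_def\<close>)
  then obtain l z where lz: "real_of_int j < z" "z < real_of_int j + 1" "DERIV G z :> l"
    "G (real_of_int j + 1) - G (real_of_int j) = (real_of_int j + 1 - real_of_int j) * l"
    by blast
  have l: "l = a * (gf (a - 1) (z + d) - gf (a - 1) z)"
    using DERIV_unique[OF lz(3) der[OF lz(1,2)]] .
  have "(a - 1) * (z + d - z) * (M + d) powr (a - 1 - 1) \<le> gf (a - 1) (z + d) - gf (a - 1) z"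
    by (rule gmono) (use a d M lz in auto)
  hence "a * ((a - 1) * d * (M + d) powr (a - 2)) \<le> l" unfolding l using a
    by (intro mult_left_mono) (auto simp: algebra_simps)
  moreover have "G (real_of_int j + 1) - G (real_of_int j) = l" using lz(4) by simp
  ultimately show ?thesis unfolding G_def by (simp add: algebra_simps)
qed


definition Gi :: "real \<Rightarrow> int \<Rightarrow> int \<Rightarrow> real" where
  "Gi a d x = \<bar>real_of_int x + real_of_int d\<bar> powr a - \<bar>real_of_int x\<bar> powr a"

lemma tele:
  fixes a M :: real and d j :: int
  assumes a: "1 < a" "a < 2" and d: "d \<ge> 1" and M: "\<bar>real_of_int j\<bar> \<le> M" "\<bar>real_of_int j + real n\<bar> \<le> M"
  shows "real n * (a * (a - 1) * d * (M + d) powr (a - 2)) \<le> Gi a d (j + int n) - Gi a d j"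
  using M(2)
proof (induction n)
  case 0
  then show ?case by simp
next
  case (Suc n)
  have h1: "\<bar>real_of_int j + real n\<bar> \<le> M" using M(1) Suc.prems by auto
  have h2: "\<bar>real_of_int (j + int n)\<bar> \<le> M" "\<bar>real_of_int (j + int n) + 1\<bar> \<le> M"
    using h1 Suc.prems by auto
  have st: "a * (a - 1) * d * (M + d) powr (a - 2) \<le> Gi a d (j + int n + 1) - Gi a d (j + int n)"
    using step[OF a d h2] unfolding Gi_def by (simp add: algebra_simps)
  have "Gi a d (j + int (Suc n)) = Gi a d (j + int n + 1)" by (simp add: algebra_simps)
  then show ?case using Suc.IH[OF h1] st by (simp add: algebra_simps)
qed

definition Tset :: "real \<Rightarrow> real \<Rightarrow> int \<Rightarrow> real \<Rightarrow> real \<Rightarrow> int set" where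
  "Tset a M d c C0 = {x::int. \<bar>real_of_int x\<bar> \<le> M \<and> \<bar>Gi a d x - c\<bar> \<le> C0}"

lemma finite_ball_int: "finite {x::int. \<bar>real_of_int x\<bar> \<le> M}"
proof (rule finite_subset)
  show "{x::int. \<bar>real_of_int x\<bar> \<le> M} \<subseteq> {-\<lceil>M\<rceil>..\<lceil>M\<rceil>}"
  proof
    fix x :: int assume "x \<in> {x::int. \<bar>real_of_int x\<bar> \<le> M}"
    hence "\<bar>real_of_int x\<bar> \<le> M" by simp
    hence "real_of_int x \<le> M" "- M \<le> real_of_int x" by linarith+
    hence "x \<le> \<lceil>M\<rceil>" "-\<lceil>M\<rceil> \<le> x" by linarith+
    thus "x \<in> {-\<lceil>M\<rceil>..\<lceil>M\<rceil>}" by simp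
  qed
qed simp

lemma finite_Tset: "finite (Tset a M d c C0)"
  by (rule finite_subset[OF _ finite_ball_int[of M]]) (auto simp: Tset_def)

lemma count_pos:
  fixes a M C0 c :: real and d :: int
  assumes a: "1 < a" "a < 2" and d: "d \<ge> 1" and C0: "C0 > 0" and M1: "M \<ge> 1"
  shows "real (card (Tset a M d c C0)) \<le> 1 + 2 * C0 / (a * (a - 1) * d * (M + d) powr (a - 2))"
proof (cases "Tset a M d c C0 = {}")
  case True
  have "0 \<le> 2 * C0 / (a * (a - 1) * d * (M + d) powr (a - 2))" using a d C0 by auto
  then show ?thesis using True by simp
next
  case False
  define T where "T = Tset a M d c C0"
  define \<delta> where "\<delta> = a * (a - 1) * d * (M + d) powr (a - 2)"
  have fin: "finite T" unfolding T_def by (rule finite_Tset)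
  have dpos: "\<delta> > 0" unfolding \<delta>_def using a d M1
    by (intro mult_pos_pos) auto
  define x0 where "x0 = Min T"
  have x0T: "x0 \<in> T" using fin False unfolding x0_def T_def by (intro Min_in) auto
  have x0le: "x0 \<le> y" if "y \<in> T" for y using fin that unfolding x0_def by simp
  define L where "L = \<lfloor>2 * C0 / \<delta>\<rfloor>"
  have sub: "T \<subseteq> {x0..x0 + L}"
  proof
    fix y assume yT: "y \<in> T"
    have "x0 \<le> y" using x0le yT .
    define n where "n = nat (y - x0)"
    have yn: "y = x0 + int n" unfolding n_def using \<open>x0 \<le> y\<close> by simp
    have x0M: "\<bar>real_of_int x0\<bar> \<le> M" and yM: "\<bar>real_of_int y\<bar> \<le> M"
      using x0T yT unfolding T_def Tset_def by auto
    have "\<bar>real_of_int x0 + real n\<bar> \<le> M" using yM yn by simp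
    from tele[OF a d x0M this] have "real n * \<delta> \<le> Gi a d y - Gi a d x0"
      unfolding \<delta>_def yn by simp
    also have "\<dots> \<le> 2 * C0" using x0T yT unfolding T_def Tset_def by auto
    finally have "real n \<le> 2 * C0 / \<delta>" using dpos by (simp add: field_simps)
    hence "int n \<le> L" unfolding L_def by linarith
    thus "y \<in> {x0..x0 + L}" using yn by simp
  qed
  have "card T \<le> card {x0..x0 + L}" by (rule card_mono) (use sub in auto)
  also have "card {x0..x0 + L} = nat (L + 1)" by simp
  finally have "real (card T) \<le> real (nat (L + 1))" by simp
  also have "\<dots> \<le> 1 + 2 * C0 / \<delta>"
  proof -
    have q: "0 \<le> 2 * C0 / \<delta>" using dpos C0 by simp
    have "L \<ge> 0" unfolding L_def using q by simp
    hence "real (nat (L + 1)) = real_of_int L + 1" by simp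
    also have "\<dots> \<le> 1 + 2 * C0 / \<delta>" unfolding L_def using of_int_floor_le[of "2 * C0 / \<delta>"] by linarith
    finally show ?thesis .
  qed
  finally show ?thesis unfolding T_def \<delta>_def .
qed


lemma sum_powr_le:
  fixes M D e :: real
  assumes "M \<ge> 1" "D \<ge> 1" "0 \<le> e" "e \<le> 1"
  shows "(M + D) powr e \<le> 2 * (M powr e + D powr e)"
proof -
  have m: "(M + D) powr e \<le> (2 * max M D) powr e"
    by (rule powr_mono2) (use assms in auto)
  also have "\<dots> = 2 powr e * max M D powr e" using assms by (simp add: powr_mult)
  also have "\<dots> \<le> 2 * max M D powr e"
  proof (rule mult_right_mono)
    show "2 powr e \<le> 2" using powr_mono[of e 1 2] assms by simp
  qed simp
  also have "max M D powr e \<le> M powr e + D powr e"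
    by (cases "M \<le> D") (auto simp: max_def)
  hence "2 * max M D powr e \<le> 2 * (M powr e + D powr e)" by simp
  finally show ?thesis .
qed

lemma count_pos2:
  fixes a M C0 c :: real and d :: int
  assumes a: "1 < a" "a < 2" and d: "d \<ge> 1" and C0: "C0 > 0" and M1: "M \<ge> 1"
  shows "real (card (Tset a M d c C0)) \<le> (1 + 4 * C0 / (a * (a - 1))) + 4 * C0 / (a * (a - 1)) * (M powr (2 - a) / d)"
proof -
  define K where "K = 4 * C0 / (a * (a - 1))"
  define D where "D = real_of_int d"
  have D1: "D \<ge> 1" using d unfolding D_def by simp
  have Kp: "K > 0" unfolding K_def using a C0 by auto
  have e1: "(M + D) powr (a - 2) = 1 / (M + D) powr (2 - a)"
    using M1 D1 by (simp add: powr_minus_divide[symmetric] powr_minus)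
  have pos: "(M + D) powr (2 - a) > 0" using M1 D1 by simp
  have "2 * C0 / (a * (a - 1) * D * (M + D) powr (a - 2)) = (K / 2) * ((M + D) powr (2 - a) / D)"
    unfolding e1 K_def using a D1 pos by (simp add: field_simps)
  also have "\<dots> \<le> (K / 2) * (2 * (M powr (2 - a) + D powr (2 - a)) / D)"
    using Kp D1 sum_powr_le[OF M1 D1, of "2 - a"] a by (intro mult_left_mono divide_right_mono) auto
  also have "\<dots> = K * (M powr (2 - a) / D) + K * (D powr (2 - a) / D)"
    using D1 by (simp add: field_simps)
  also have "K * (D powr (2 - a) / D) \<le> K"
  proof -
    have "D powr (2 - a) \<le> D powr 1" using powr_mono[of "2 - a" 1 D] a D1 by simp
    hence "D powr (2 - a) / D \<le> 1" using D1 by simp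
    thus ?thesis using Kp mult_left_mono[of "D powr (2 - a) / D" 1 K] by simp
  qed
  finally have "2 * C0 / (a * (a - 1) * D * (M + D) powr (a - 2)) \<le> K * (M powr (2 - a) / D) + K"
    by simp
  with count_pos[OF a d C0 M1, of c] show ?thesis unfolding K_def D_def by simp
qed

lemma Tset_neg: "Tset a M d c C0 = uminus ` Tset a M (-d) c C0"
proof -
  have g: "Gi a (-d) (-x) = Gi a d x" for x
  proof -
    have "\<bar>- real_of_int x + - real_of_int d\<bar> = \<bar>real_of_int x + real_of_int d\<bar>" by linarith
    thus ?thesis unfolding Gi_def by simp
  qed
  show ?thesis
  proof (rule set_eqI, rule iffI)
    fix x assume "x \<in> Tset a M d c C0"
    hence "-x \<in> Tset a M (-d) c C0" unfolding Tset_def using g[of x] by simp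
    thus "x \<in> uminus ` Tset a M (-d) c C0" by (rule image_eqI[rotated]) simp
  next
    fix x assume "x \<in> uminus ` Tset a M (-d) c C0"
    then obtain y where y: "x = -y" "y \<in> Tset a M (-d) c C0" by blast
    thus "x \<in> Tset a M d c C0" unfolding Tset_def using g[of x] by simp
  qed
qed

lemma count_any:
  fixes a M C0 c :: real and d :: int
  assumes a: "1 < a" "a < 2" and d: "d \<noteq> 0" and C0: "C0 > 0" and M1: "M \<ge> 1"
  shows "real (card (Tset a M d c C0)) \<le> (1 + 4 * C0 / (a * (a - 1))) + 4 * C0 / (a * (a - 1)) * (M powr (2 - a) / \<bar>d\<bar>)"
proof (cases "d > 0")
  case True
  then show ?thesis using count_pos2[OF a _ C0 M1, of d c] by simp
next
  case False
  hence "-d \<ge> 1" using d by simp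
  have "card (Tset a M d c C0) = card (Tset a M (-d) c C0)"
    unfolding Tset_neg[of a M d] by (rule card_image) (simp add: inj_on_def)
  then show ?thesis using count_pos2[OF a \<open>-d \<ge> 1\<close> C0 M1, of c] False by simp
qed


definition Yset :: "nat \<Rightarrow> int set" where "Yset n = {y::int. y \<noteq> 0 \<and> \<bar>y\<bar> \<le> int n}"

lemma Yset_fin: "finite (Yset n)"
  by (rule finite_subset[of _ "{-int n..int n}"]) (auto simp: Yset_def)

lemma Yset_Suc: "Yset (Suc n) = insert (int n + 1) (insert (- int n - 1) (Yset n))"
  unfolding Yset_def by auto

lemma harm_int:
  "n \<ge> 1 \<Longrightarrow> (\<Sum>y\<in>Yset n. 1 / \<bar>real_of_int y\<bar>) \<le> 2 * (1 + ln (real n))"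
proof (induction n)
  case 0
  then show ?case by simp
next
  case (Suc n)
  have eq: "(\<Sum>y\<in>Yset (Suc n). 1 / \<bar>real_of_int y\<bar>) = (\<Sum>y\<in>Yset n. 1 / \<bar>real_of_int y\<bar>) + 2 / (real n + 1)"
  proof -
    have n1: "int n + 1 \<notin> insert (- int n - 1) (Yset n)" "- int n - 1 \<notin> Yset n"
      unfolding Yset_def by auto
    show ?thesis unfolding Yset_Suc using n1 Yset_fin[of n]
      by (simp add: sum.insert add.commute)
  qed
  show ?case
  proof (cases "n = 0")
    case True
    have "Yset 1 = {1, -1}" unfolding Yset_def by auto
    then show ?thesis using True by simp
  next
    case False
    hence npos: "real n > 0" by simp
    have IH: "(\<Sum>y\<in>Yset n. 1 / \<bar>real_of_int y\<bar>) \<le> 2 * (1 + ln (real n))" using Suc.IH False by simp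
    have "ln (real n / (real n + 1)) \<le> real n / (real n + 1) - 1"
      by (rule ln_le_minus_one) (use npos in simp)
    moreover have "ln (real n / (real n + 1)) = ln (real n) - ln (real n + 1)"
      using npos by (simp add: ln_div)
    moreover have "real n / (real n + 1) - 1 = - 1 / (real n + 1)" using npos by (simp add: field_simps)
    ultimately have "1 / (real n + 1) \<le> ln (real n + 1) - ln (real n)" by simp
    then show ?thesis unfolding eq using IH by (simp add: add.commute)
  qed
qed

lemma card_ball_int:
  assumes "M \<ge> 0"
  shows "real (card {x::int. \<bar>real_of_int x\<bar> \<le> M}) \<le> 2 * M + 1"
proof -
  have "{x::int. \<bar>real_of_int x\<bar> \<le> M} = {-\<lfloor>M\<rfloor>..\<lfloor>M\<rfloor>}"
  proof (rule set_eqI)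
    fix x :: int
    have "\<bar>real_of_int x\<bar> \<le> M \<longleftrightarrow> real_of_int x \<le> M \<and> real_of_int (-x) \<le> M" by auto
    also have "\<dots> \<longleftrightarrow> x \<le> \<lfloor>M\<rfloor> \<and> -x \<le> \<lfloor>M\<rfloor>" by (simp only: le_floor_iff)
    also have "\<dots> \<longleftrightarrow> x \<in> {-\<lfloor>M\<rfloor>..\<lfloor>M\<rfloor>}" by auto
    finally show "x \<in> {x::int. \<bar>real_of_int x\<bar> \<le> M} \<longleftrightarrow> x \<in> {-\<lfloor>M\<rfloor>..\<lfloor>M\<rfloor>}" by simp
  qed
  moreover have "card {-\<lfloor>M\<rfloor>..\<lfloor>M\<rfloor>} = nat (2 * \<lfloor>M\<rfloor> + 1)" by simp
  moreover have "\<lfloor>M\<rfloor> \<ge> 0" using assms by simp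
  ultimately show ?thesis using of_int_floor_le[of M] by simp
qed


definition Pset :: "real \<Rightarrow> real \<Rightarrow> (int \<times> int) set" where
  "Pset N1 N2 = {(k1, k2). \<bar>real_of_int k1\<bar> \<le> N1 \<and> \<bar>real_of_int k2\<bar> \<le> N2 \<and> k1 \<noteq> k2}"

lemma inner_sum:
  fixes N1 N2 :: real and k1 :: int
  assumes N: "N1 \<ge> 1" "N2 \<ge> 1" and k1: "\<bar>real_of_int k1\<bar> \<le> N1"
  shows "(\<Sum>k2\<in>{k2. \<bar>real_of_int k2\<bar> \<le> N2 \<and> k1 \<noteq> k2}. 1 / \<bar>real_of_int (k1 - k2)\<bar>)
      \<le> 2 * (1 + ln (N1 + N2))"
proof -
  define A where "A = {k2. \<bar>real_of_int k2\<bar> \<le> N2 \<and> k1 \<noteq> k2}"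
  define n where "n = nat \<lfloor>N1 + N2\<rfloor>"
  have fl: "\<lfloor>N1 + N2\<rfloor> \<ge> 2" using N by (simp add: le_floor_iff)
  have "(1::int) \<le> \<lfloor>N1 + N2\<rfloor>" using N by (simp add: le_floor_iff)
  hence "nat 1 \<le> nat \<lfloor>N1 + N2\<rfloor>" by (rule nat_mono)
  hence n1: "n \<ge> 1" unfolding n_def by simp
  have nle: "real n \<le> N1 + N2" unfolding n_def using fl of_int_floor_le[of "N1 + N2"] by simp
  have inj: "inj_on (\<lambda>k2. k1 - k2) A" by (simp add: inj_on_def)
  have sub: "(\<lambda>k2. k1 - k2) ` A \<subseteq> Yset n"
  proof
    fix y assume "y \<in> (\<lambda>k2. k1 - k2) ` A"
    then obtain k2 where k2: "y = k1 - k2" "\<bar>real_of_int k2\<bar> \<le> N2" "k1 \<noteq> k2" unfolding A_def by blast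
    have "\<bar>real_of_int y\<bar> \<le> N1 + N2" using k1 k2 by simp
    hence "\<bar>y\<bar> \<le> \<lfloor>N1 + N2\<rfloor>" by (simp add: le_floor_iff)
    thus "y \<in> Yset n" unfolding Yset_def n_def using k2 fl by simp
  qed
  have "(\<Sum>k2\<in>A. 1 / \<bar>real_of_int (k1 - k2)\<bar>) = (\<Sum>y\<in>(\<lambda>k2. k1 - k2) ` A. 1 / \<bar>real_of_int y\<bar>)"
    by (simp add: sum.reindex[OF inj])
  also have "\<dots> \<le> (\<Sum>y\<in>Yset n. 1 / \<bar>real_of_int y\<bar>)"
    by (rule sum_mono2[OF Yset_fin sub]) simp
  also have "\<dots> \<le> 2 * (1 + ln (real n))" by (rule harm_int[OF n1])
  also have "\<dots> \<le> 2 * (1 + ln (N1 + N2))" using n1 nle by simp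
  finally show ?thesis unfolding A_def .
qed

lemma pair_sum:
  fixes N1 N2 :: real
  assumes N: "N1 \<ge> 1" "N2 \<ge> 1"
  shows "(\<Sum>p\<in>Pset N1 N2. 1 / \<bar>real_of_int (fst p - snd p)\<bar>) \<le> (2 * N1 + 1) * (2 * (1 + ln (N1 + N2)))"
proof -
  define B1 where "B1 = {x::int. \<bar>real_of_int x\<bar> \<le> N1}"
  define A where "A = (\<lambda>k1::int. {k2. \<bar>real_of_int k2\<bar> \<le> N2 \<and> k1 \<noteq> k2})"
  have P: "Pset N1 N2 = Sigma B1 A" unfolding Pset_def B1_def A_def by auto
  have finA: "finite (A x)" for x unfolding A_def
    by (rule finite_subset[OF _ finite_ball_int[of N2]]) auto
  have finB: "finite B1" unfolding B1_def by (rule finite_ball_int)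
  have "(\<Sum>p\<in>Pset N1 N2. 1 / \<bar>real_of_int (fst p - snd p)\<bar>)
      = (\<Sum>k1\<in>B1. \<Sum>k2\<in>A k1. 1 / \<bar>real_of_int (k1 - k2)\<bar>)"
    unfolding P using sum.Sigma[OF finB, of A "\<lambda>k1 k2. 1 / \<bar>real_of_int (k1 - k2)\<bar>"] finA
    by (simp add: case_prod_beta)
  also have "\<dots> \<le> (\<Sum>k1\<in>B1. 2 * (1 + ln (N1 + N2)))"
    by (rule sum_mono) (use inner_sum[OF N] in \<open>auto simp: A_def B1_def\<close>)
  also have "\<dots> = real (card B1) * (2 * (1 + ln (N1 + N2)))" by simp
  also have "\<dots> \<le> (2 * N1 + 1) * (2 * (1 + ln (N1 + N2)))"
  proof (rule mult_right_mono)
    show "real (card B1) \<le> 2 * N1 + 1" unfolding B1_def by (rule card_ball_int) (use N in simp)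
    have "ln (N1 + N2) \<ge> 0" using N by simp
    thus "0 \<le> 2 * (1 + ln (N1 + N2))" by simp
  qed
  finally show ?thesis .
qed

lemma pair_sum_swap:
  "(\<Sum>p\<in>Pset N1 N2. 1 / \<bar>real_of_int (fst p - snd p)\<bar>) = (\<Sum>p\<in>Pset N2 N1. 1 / \<bar>real_of_int (fst p - snd p)\<bar>)"
proof -
  have "Pset N1 N2 = prod.swap ` Pset N2 N1" unfolding Pset_def by auto
  moreover have "inj_on prod.swap (Pset N2 N1)" by (metis inj_on_def swap_swap)
  ultimately show ?thesis by (simp add: sum.reindex abs_minus_commute)
qed



lemma log_bound:
  fixes N1 N2 :: real
  assumes N: "N1 \<ge> 1" "N2 \<ge> 1"
  shows "1 + ln (N1 + N2) \<le> 4 * ln (2 + max N1 N2)"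
proof -
  define L where "L = ln (2 + max N1 N2)"
  have "N1 + N2 \<le> 2 * (2 + max N1 N2)" by simp
  hence "ln (N1 + N2) \<le> ln (2 * (2 + max N1 N2))" using N by simp
  also have "\<dots> = ln 2 + L" unfolding L_def using ln_mult[of 2 "2 + max N1 N2"] N by (simp add: max_def)
  also have "ln (2::real) \<le> 1" using ln_le_minus_one[of 2] by simp
  hence "ln 2 + L \<le> 1 + L" by simp
  finally have h1: "ln (N1 + N2) \<le> 1 + L" .
  have "ln (1 / (2 + max N1 N2)) \<le> 1 / (2 + max N1 N2) - 1"
    by (rule ln_le_minus_one) (use N in simp)
  moreover have "ln (1 / (2 + max N1 N2)) = - L" unfolding L_def using N by (simp add: ln_div)
  moreover have "1 / (2 + max N1 N2) \<le> 1 / 3" using N by (simp add: field_simps)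
  ultimately have "L \<ge> 2 / 3" by simp
  with h1 show ?thesis unfolding L_def by simp
qed

lemma card_Pset:
  assumes N: "N1 \<ge> 1" "N2 \<ge> 1"
  shows "real (card (Pset N1 N2)) \<le> 9 * N1 * N2" and "finite (Pset N1 N2)"
proof -
  define B1 where "B1 = {x::int. \<bar>real_of_int x\<bar> \<le> N1}"
  define B2 where "B2 = {x::int. \<bar>real_of_int x\<bar> \<le> N2}"
  have sub: "Pset N1 N2 \<subseteq> B1 \<times> B2" unfolding Pset_def B1_def B2_def by auto
  have fin: "finite (B1 \<times> B2)" unfolding B1_def B2_def using finite_ball_int by blast
  show "finite (Pset N1 N2)" using finite_subset[OF sub fin] .
  have "card (Pset N1 N2) \<le> card (B1 \<times> B2)" by (rule card_mono[OF fin sub])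
  hence "real (card (Pset N1 N2)) \<le> real (card B1) * real (card B2)"
    by (metis card_cartesian_product of_nat_le_iff of_nat_mult)
  also have "\<dots> \<le> (2 * N1 + 1) * (2 * N2 + 1)"
  proof -
    have c1: "real (card B1) \<le> 2 * N1 + 1" unfolding B1_def by (rule card_ball_int) (use N in simp)
    have c2: "real (card B2) \<le> 2 * N2 + 1" unfolding B2_def by (rule card_ball_int) (use N in simp)
    show ?thesis by (rule mult_mono[OF c1 c2]) (use N in auto)
  qed
  also have "\<dots> \<le> (3 * N1) * (3 * N2)" by (rule mult_mono) (use N in auto)
  also have "\<dots> = 9 * N1 * N2" by simp
  finally show "real (card (Pset N1 N2)) \<le> 9 * N1 * N2" .
qed



lemma bound1:
  fixes a C0 m N N1 N2 N3 :: real
  assumes a: "1 < a" "a < 2" and C0: "C0 > 0" and N: "N1 \<ge> 1" "N2 \<ge> 1" "N3 \<ge> 1"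
  shows "real (card (resS a C0 m N N1 N2 N3)) \<le>
    (9 * (1 + 4 * C0 / (a * (a - 1))) + 24 * (4 * C0 / (a * (a - 1)))) *
      (N3 powr (2 - a) * ln (2 + max N1 N2) * min N1 N2 + N1 * N2)"
proof -
  define K where "K = 4 * C0 / (a * (a - 1))"
  define A where "A = 1 + K"
  define F where "F = (\<lambda>k::int. \<bar>real_of_int k\<bar> powr a)"
  define P where "P = Pset N1 N2"
  define T where "T = (\<lambda>p::int\<times>int. Tset a N3 (fst p - snd p) (F (fst p) - F (snd p) - m) C0)"
  define S where "S = resS a C0 m N N1 N2 N3"
  define L where "L = ln (2 + max N1 N2)"
  have Kp: "K > 0" unfolding K_def using a C0 by auto
  have Lp: "L > 0" unfolding L_def using N by simp
  have finP: "finite P" unfolding P_def using card_Pset[OF N(1,2)] by blast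
  have finT: "\<forall>p\<in>P. finite (T p)" unfolding T_def using finite_Tset by blast
  define f where "f = (\<lambda>(k::int, k1::int, k2::int, k3::int). ((k1, k2), k3))"
  have Sk: "k = k1 - k2 + k3" if "(k, k1, k2, k3) \<in> S" for k k1 k2 k3
    using that unfolding S_def resS_def by blast
  have inj: "inj_on f S"
  proof (rule inj_onI)
    fix x y assume xy: "x \<in> S" "y \<in> S" "f x = f y"
    obtain k k1 k2 k3 where x: "x = (k, k1, k2, k3)" by (cases x) auto
    obtain l l1 l2 l3 where y: "y = (l, l1, l2, l3)" by (cases y) auto
    have "k1 = l1" "k2 = l2" "k3 = l3" using xy(3) unfolding x y f_def by auto
    moreover have "k = k1 - k2 + k3" "l = l1 - l2 + l3" using Sk xy(1,2) unfolding x y by auto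
    ultimately show "x = y" unfolding x y by simp
  qed
  have img: "f ` S \<subseteq> Sigma P T"
  proof
    fix q assume "q \<in> f ` S"
    then obtain k k1 k2 k3 where q: "q = ((k1, k2), k3)" and kS: "(k, k1, k2, k3) \<in> S"
      unfolding f_def by auto
    from kS have c: "k = k1 - k2 + k3" "k2 \<noteq> k1" "k2 \<noteq> k3"
      "\<bar>F k1 - F k2 + F k3 - F k - m\<bar> \<le> C0"
      "\<bar>real_of_int k1\<bar> \<le> N1" "\<bar>real_of_int k2\<bar> \<le> N2" "\<bar>real_of_int k3\<bar> \<le> N3"
      unfolding S_def resS_def F_def by auto
    have "Gi a (k1 - k2) k3 = F k - F k3" unfolding Gi_def F_def c(1) by (simp add: algebra_simps)
    hence "\<bar>Gi a (k1 - k2) k3 - (F k1 - F k2 - m)\<bar> \<le> C0" using c(4) by (simp add: abs_minus_commute algebra_simps)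
    thus "q \<in> Sigma P T" unfolding q P_def T_def Pset_def Tset_def using c by auto
  qed
  have "card S \<le> card (Sigma P T)"
    by (rule card_inj_on_le[OF inj img]) (use finP finT in auto)
  also have "\<dots> = (\<Sum>p\<in>P. card (T p))" using finP finT by simp
  finally have "real (card S) \<le> (\<Sum>p\<in>P. real (card (T p)))" by (metis of_nat_le_iff of_nat_sum)
  also have "\<dots> \<le> (\<Sum>p\<in>P. A + K * (N3 powr (2 - a) / \<bar>real_of_int (fst p - snd p)\<bar>))"
  proof (rule sum_mono)
    fix p assume "p \<in> P"
    hence "fst p - snd p \<noteq> 0" unfolding P_def Pset_def by auto
    from count_any[OF a this C0 N(3)] show "real (card (T p)) \<le> A + K * (N3 powr (2 - a) / \<bar>real_of_int (fst p - snd p)\<bar>)"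
      unfolding T_def A_def K_def by simp
  qed
  also have "\<dots> = A * real (card P) + K * N3 powr (2 - a) * (\<Sum>p\<in>P. 1 / \<bar>real_of_int (fst p - snd p)\<bar>)"
    by (simp add: sum.distrib sum_distrib_left)
  also have "\<dots> \<le> A * (9 * N1 * N2) + K * N3 powr (2 - a) * (24 * min N1 N2 * L)"
  proof (rule add_mono)
    show "A * real (card P) \<le> A * (9 * N1 * N2)" unfolding P_def using card_Pset[OF N(1,2)] Kp A_def
      by (intro mult_left_mono) auto
    have lb: "1 + ln (N1 + N2) \<le> 4 * L" unfolding L_def by (rule log_bound[OF N(1,2)])
    have s1: "(\<Sum>p\<in>P. 1 / \<bar>real_of_int (fst p - snd p)\<bar>) \<le> (2 * N1 + 1) * (2 * (1 + ln (N1 + N2)))"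
      unfolding P_def by (rule pair_sum[OF N(1,2)])
    have s2: "(\<Sum>p\<in>P. 1 / \<bar>real_of_int (fst p - snd p)\<bar>) \<le> (2 * N2 + 1) * (2 * (1 + ln (N1 + N2)))"
      unfolding P_def pair_sum_swap[of N1 N2] using pair_sum[OF N(2,1)] by (simp add: add.commute)
    have lnp: "0 \<le> 1 + ln (N1 + N2)" using N by simp
    have "(\<Sum>p\<in>P. 1 / \<bar>real_of_int (fst p - snd p)\<bar>) \<le> (2 * min N1 N2 + 1) * (2 * (1 + ln (N1 + N2)))"
      using s1 s2 by (cases "N1 \<le> N2") (auto simp: min_def)
    also have "\<dots> \<le> (3 * min N1 N2) * (2 * (4 * L))"
      using N lnp lb by (intro mult_mono) auto
    finally have "(\<Sum>p\<in>P. 1 / \<bar>real_of_int (fst p - snd p)\<bar>) \<le> 24 * min N1 N2 * L" by simp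
    thus "K * N3 powr (2 - a) * (\<Sum>p\<in>P. 1 / \<bar>real_of_int (fst p - snd p)\<bar>) \<le> K * N3 powr (2 - a) * (24 * min N1 N2 * L)"
      using Kp by (intro mult_left_mono) auto
  qed
  also have "\<dots> \<le> (9 * A + 24 * K) * (N3 powr (2 - a) * L * min N1 N2 + N1 * N2)"
  proof -
    have X: "0 \<le> N3 powr (2 - a) * L * min N1 N2" using Lp N by simp
    have Y: "0 \<le> N1 * N2" using N by simp
    have "A * (9 * N1 * N2) + K * N3 powr (2 - a) * (24 * min N1 N2 * L)
        = 9 * A * (N1 * N2) + 24 * K * (N3 powr (2 - a) * L * min N1 N2)" by (simp add: algebra_simps)
    also have "\<dots> \<le> (9 * A + 24 * K) * (N1 * N2) + (9 * A + 24 * K) * (N3 powr (2 - a) * L * min N1 N2)"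
      using Kp X Y unfolding A_def by (intro add_mono mult_right_mono) auto
    finally show ?thesis by (simp add: algebra_simps)
  qed
  finally have "real (card S) \<le> (9 * A + 24 * K) * (N3 powr (2 - a) * L * min N1 N2 + N1 * N2)" .
  thus ?thesis by (simp only: S_def A_def K_def L_def)
qed


lemma mem_swap:
  "((k, k1, k2, k3) \<in> resS a C0 m N N1 N2 N3) = ((k, k3, k2, k1) \<in> resS a C0 m N N3 N2 N1)"
proof -
  have e: "\<bar>p1 - p2 + p3 - p4 - m\<bar> = \<bar>p3 - p2 + p1 - p4 - m\<bar>" for p1 p2 p3 p4 :: real
    by (simp add: algebra_simps)
  have e2: "(k = k1 - k2 + k3) = (k = k3 - k2 + k1)" by auto
  show ?thesis unfolding resS_def mem_Collect_eq case_prod_conv e2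
    by (subst e) blast
qed

lemma resS_swap: "card (resS a C0 m N N1 N2 N3) = card (resS a C0 m N N3 N2 N1)"
proof -
  define sw where "sw = (\<lambda>(k::int, k1::int, k2::int, k3::int). (k, k3, k2, k1))"
  have inv: "sw (sw x) = x" for x unfolding sw_def by (cases x) auto
  have mem: "(sw x \<in> resS a C0 m N N3 N2 N1) = (x \<in> resS a C0 m N N1 N2 N3)" for x
  proof -
    obtain k k1 k2 k3 where x: "x = (k, k1, k2, k3)" by (cases x) auto
    show ?thesis unfolding x sw_def using mem_swap[of k k1 k2 k3 a C0 m N N1 N2 N3] by simp
  qed
  have img: "sw ` resS a C0 m N N1 N2 N3 = resS a C0 m N N3 N2 N1"
  proof (rule set_eqI, rule iffI)
    fix y assume "y \<in> sw ` resS a C0 m N N1 N2 N3"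
    then obtain x where "y = sw x" "x \<in> resS a C0 m N N1 N2 N3" by blast
    thus "y \<in> resS a C0 m N N3 N2 N1" using mem by simp
  next
    fix y assume y: "y \<in> resS a C0 m N N3 N2 N1"
    have "sw y \<in> resS a C0 m N N1 N2 N3" using mem[of "sw y"] y inv[of y] by simp
    moreover have "y = sw (sw y)" using inv by simp
    ultimately show "y \<in> sw ` resS a C0 m N N1 N2 N3" by blast
  qed
  have "inj_on sw (resS a C0 m N N1 N2 N3)" by (rule inj_on_inverseI[where g = sw]) (rule inv)
  from card_image[OF this] img show ?thesis by simp
qed

theorem lemma2p10:
  fixes \<alpha> C0 :: real
  assumes "1 < \<alpha>" "\<alpha> < 2" "C0 > 0"
  shows "\<exists>C>0. \<forall>N N1 N2 N3 m :: real.
     dyadic N \<longrightarrow> dyadic N1 \<longrightarrow> dyadic N2 \<longrightarrow> dyadic N3 \<longrightarrow>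
     1 \<le> N1 \<longrightarrow> N1 \<le> N \<longrightarrow> 1 \<le> N2 \<longrightarrow> N2 \<le> N \<longrightarrow> 1 \<le> N3 \<longrightarrow> N3 \<le> N \<longrightarrow>
     real (card (resS \<alpha> C0 m N N1 N2 N3)) \<le>
       C * min (N3 powr (2 - \<alpha>) * ln (2 + max N1 N2) * min N1 N2 + N1 * N2)
               (N1 powr (2 - \<alpha>) * ln (2 + max N2 N3) * min N2 N3 + N2 * N3)"
proof -
  define Cst where "Cst = 9 * (1 + 4 * C0 / (\<alpha> * (\<alpha> - 1))) + 24 * (4 * C0 / (\<alpha> * (\<alpha> - 1)))"
  have Cp: "Cst > 0" unfolding Cst_def using assms by (intro add_pos_pos mult_pos_pos) auto
  show ?thesis
  proof (intro exI[of _ Cst] conjI allI impI Cp)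
    fix N N1 N2 N3 m :: real
    assume h: "1 \<le> N1" "1 \<le> N2" "1 \<le> N3"
    have b1: "real (card (resS \<alpha> C0 m N N1 N2 N3)) \<le> Cst * (N3 powr (2 - \<alpha>) * ln (2 + max N1 N2) * min N1 N2 + N1 * N2)"
      unfolding Cst_def by (rule bound1[OF assms h])
    have "real (card (resS \<alpha> C0 m N N3 N2 N1)) \<le> Cst * (N1 powr (2 - \<alpha>) * ln (2 + max N3 N2) * min N3 N2 + N3 * N2)"
      unfolding Cst_def by (rule bound1[OF assms h(3) h(2) h(1)])
    hence b2: "real (card (resS \<alpha> C0 m N N1 N2 N3)) \<le> Cst * (N1 powr (2 - \<alpha>) * ln (2 + max N2 N3) * min N2 N3 + N2 * N3)"
      unfolding resS_swap[of \<alpha> C0 m N N1 N2 N3] by (simp add: max.commute min.commute mult.commute)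
    show "real (card (resS \<alpha> C0 m N N1 N2 N3)) \<le>
       Cst * min (N3 powr (2 - \<alpha>) * ln (2 + max N1 N2) * min N1 N2 + N1 * N2)
               (N1 powr (2 - \<alpha>) * ln (2 + max N2 N3) * min N2 N3 + N2 * N3)"
      using b1 b2 by (simp add: min_def)
  qed
qed

end
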